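(* The homomorphism $\mu:\mathrm{PSL}(2,\mathbb{Z})\to\mathrm{PGL}(2,\mathbb{Z}[t,t^{-1},(1+t)^{-1}])$ is injective.
   Context: Matrices in square brackets denote their classes in projective linear groups (quotients of $\mathrm{GL}_2$ by unit scalars). $\mu$ is the group homomorphism determined by $\mu\left[\begin{smallmatrix}1&0\\1&1\end{smallmatrix}\right]=\left[\begin{smallmatrix}1&0\\0&-t\end{smallmatrix}\right]$ and $\mu\left[\begin{smallmatrix}1&-1\\0&1\end{smallmatrix}\right]=\left[\begin{smallmatrix}-\frac{t^2}{1+t}&\frac{t}{1+t}\\ \frac{1+t+t^2}{1+t}&\frac{1}{1+t}\end{smallmatrix}\right]$ (these images satisfy the defining relations $s_1s_2s_1=s_2s_1s_2$, $(s_1s_2s_1)^2=1$ of $\mathrm{PSL}(2,\mathbb{Z})$ with $s_1=\left[\begin{smallmatrix}1&-1\\0&1\end{smallmatrix}\right]$, $s_2=\left[\begin{smallmatrix}1&0\\1&1\end{smallmatrix}\right]$, so $\mu$ is well defined). *)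

theory Defs
  imports Main "HOL-Computational_Algebra.Polynomial" "HOL-Computational_Algebra.Fraction_Field"
begin

text \<open>2x2 matrices over a ring, written as (a, b, c, d) for [[a, b], [c, d]].\<close>
type_synonym 'a mat2 = "'a \<times> 'a \<times> 'a \<times> 'a"

fun mmul :: "'a::comm_ring_1 mat2 \<Rightarrow> 'a mat2 \<Rightarrow> 'a mat2" where
  "mmul (a, b, c, d) (e, f, g, h) = (a*e + b*g, a*f + b*h, c*e + d*g, c*f + d*h)"

definition mid :: "'a::comm_ring_1 mat2" where
  "mid = (1, 0, 0, 1)"

fun msmult :: "'a::comm_ring_1 \<Rightarrow> 'a mat2 \<Rightarrow> 'a mat2" where
  "msmult k (a, b, c, d) = (k*a, k*b, k*c, k*d)"

fun minv :: "'a::field mat2 \<Rightarrow> 'a mat2" where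
  "minv (a, b, c, d) = (let D = a*d - b*c in (d/D, -b/D, -c/D, a/D))"

text \<open>Words in the generators s1, s2 of PSL(2,Z) and their inverses.
  Every element of PSL(2,Z) is the class of the value of such a word.\<close>
datatype gen = S1 | S1inv | S2 | S2inv

fun gen_Z :: "gen \<Rightarrow> int mat2" where
  "gen_Z S1 = (1, -1, 0, 1)"
| "gen_Z S1inv = (1, 1, 0, 1)"
| "gen_Z S2 = (1, 0, 1, 1)"
| "gen_Z S2inv = (1, 0, -1, 1)"

definition evalZ :: "gen list \<Rightarrow> int mat2" where
  "evalZ w = foldr (\<lambda>g M. mmul (gen_Z g) M) w mid"

text \<open>Equality in PSL(2,Z) = SL(2,Z)/{+-1}.\<close>
definition psl_eq :: "int mat2 \<Rightarrow> int mat2 \<Rightarrow> bool" where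
  "psl_eq A B \<longleftrightarrow> A = B \<or> A = msmult (-1) B"

text \<open>The field Q(t) realised as the fraction field of Z[t], and the variable t.\<close>
type_synonym rf = "int poly fract"

definition tt :: rf where
  "tt = Fract [:0, 1:] 1"

text \<open>The ring R = Z[t, t^-1, (1+t)^-1] as a subring of the fraction field of Z[t].\<close>
definition Rring :: "rf set" where
  "Rring = {Fract p 1 / (tt ^ a * (1 + tt) ^ b) | p a b. True}"

definition R_unit :: "rf \<Rightarrow> bool" where
  "R_unit u \<longleftrightarrow> u \<in> Rring \<and> inverse u \<in> Rring \<and> u \<noteq> 0"

definition mu_s1 :: "rf mat2" where
  "mu_s1 = (- (tt ^ 2) / (1 + tt), tt / (1 + tt), (1 + tt + tt ^ 2) / (1 + tt), 1 / (1 + tt))"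

definition mu_s2 :: "rf mat2" where
  "mu_s2 = (1, 0, 0, - tt)"

fun gen_mu :: "gen \<Rightarrow> rf mat2" where
  "gen_mu S1 = mu_s1"
| "gen_mu S1inv = minv mu_s1"
| "gen_mu S2 = mu_s2"
| "gen_mu S2inv = minv mu_s2"

definition evalMu :: "gen list \<Rightarrow> rf mat2" where
  "evalMu w = foldr (\<lambda>g M. mmul (gen_mu g) M) w mid"

text \<open>Equality in PGL(2,R) = GL(2,R)/R^*: matrices differ by a unit scalar of R.\<close>
definition pgl_eq :: "rf mat2 \<Rightarrow> rf mat2 \<Rightarrow> bool" where
  "pgl_eq A B \<longleftrightarrow> (\<exists>u. R_unit u \<and> A = msmult u B)"

end

theory Submission
  imports Defs
begin


lemma mmul_assoc: "mmul (mmul A B) C = mmul A (mmul B C)"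
  by (cases A; cases B; cases C) (simp add: algebra_simps)

lemma mmul_smult_left: "mmul (msmult k A) B = msmult k (mmul A B)"
  by (cases A; cases B) (simp add: algebra_simps)

lemma mmul_smult_right: "mmul A (msmult k B) = msmult k (mmul A B)"
  by (cases A; cases B) (simp add: algebra_simps)

lemma msmult_msmult: "msmult a (msmult b A) = msmult (a*b) A"
  by (cases A) (simp add: algebra_simps)

lemma msmult_one: "msmult 1 A = A"
  by (cases A) simp

lemma mmul_mid_left: "mmul mid A = A"
  by (cases A) (simp add: mid_def)

definition rel :: "('a::comm_ring_1 \<Rightarrow> bool) \<Rightarrow> 'a mat2 \<Rightarrow> 'a mat2 \<Rightarrow> bool" where
  "rel S X Y \<longleftrightarrow> (\<exists>k1 k2. S k1 \<and> S k2 \<and> msmult k1 X = msmult k2 Y)"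

lemma rel_refl: "S 1 \<Longrightarrow> rel S X X"
  unfolding rel_def by blast

lemma rel_sym: "rel S X Y \<Longrightarrow> rel S Y X"
  unfolding rel_def by metis

lemma rel_trans:
  assumes cl: "\<And>a b. S a \<Longrightarrow> S b \<Longrightarrow> S (a*b)" and "rel S X Y" "rel S Y Z"
  shows "rel S X Z"
proof -
  obtain k1 k2 where 1: "S k1" "S k2" "msmult k1 X = msmult k2 Y" using assms(2) unfolding rel_def by blast
  obtain k3 k4 where 2: "S k3" "S k4" "msmult k3 Y = msmult k4 Z" using assms(3) unfolding rel_def by blast
  have "msmult (k3*k1) X = msmult (k2*k4) Z"
    by (metis 1(3) 2(3) msmult_msmult mult.commute)
  then show ?thesis unfolding rel_def using 1 2 cl by blast
qed

lemma rel_mmul_left: "rel S X Y \<Longrightarrow> rel S (mmul M X) (mmul M Y)"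
  unfolding rel_def by (metis mmul_smult_right)

lemma rel_mmul_right: "rel S X Y \<Longrightarrow> rel S (mmul X M) (mmul Y M)"
  unfolding rel_def by (metis mmul_smult_left)

lemma rel_smult: "S c \<Longrightarrow> S 1 \<Longrightarrow> rel S (msmult c X) X"
  unfolding rel_def by (metis msmult_msmult msmult_one mult.commute)

lemma rel_eqI: "msmult k1 X = msmult k2 Y \<Longrightarrow> S k1 \<Longrightarrow> S k2 \<Longrightarrow> rel S X Y"
  unfolding rel_def by blast



datatype lt = LA | LB | LBi

fun lmul :: "lt \<Rightarrow> lt list \<Rightarrow> lt list" where
  "lmul LA (LA # r) = r"
| "lmul LA r = LA # r"
| "lmul LB (LB # r) = LBi # r"
| "lmul LB (LBi # r) = r"
| "lmul LB r = LB # r"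
| "lmul LBi (LBi # r) = LB # r"
| "lmul LBi (LB # r) = r"
| "lmul LBi r = LBi # r"

fun gl :: "gen \<Rightarrow> lt list \<Rightarrow> lt list" where
  "gl S1 n = lmul LBi (lmul LA n)"
| "gl S1inv n = lmul LA (lmul LB n)"
| "gl S2 n = lmul LA (lmul LBi n)"
| "gl S2inv n = lmul LB (lmul LA n)"

definition nf :: "gen list \<Rightarrow> lt list" where
  "nf w = foldr gl w []"

definition compat :: "lt \<Rightarrow> lt \<Rightarrow> bool" where
  "compat x y \<longleftrightarrow> ((x = LA) \<noteq> (y = LA))"

fun okn :: "lt list \<Rightarrow> bool" where
  "okn [] = True"
| "okn [x] = True"
| "okn (x # y # r) = (compat x y \<and> okn (y # r))"

lemma okn_tl: "okn (x # r) \<Longrightarrow> okn r"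
  by (cases r) auto

lemma okn_swapB: "okn (LB # r) = okn (LBi # r)"
  by (cases r) (auto simp: compat_def)

lemma okn_lmul: "okn n \<Longrightarrow> okn (lmul x n)"
  by (induction x n rule: lmul.induct) (auto simp: compat_def okn_swapB elim: okn_tl)

lemma okn_nf: "okn (nf w)"
proof (induction w)
  case Nil then show ?case by (simp add: nf_def)
next
  case (Cons g w)
  then show ?case by (cases g) (simp_all add: nf_def okn_lmul)
qed

definition evalN :: "(lt \<Rightarrow> 'a::comm_ring_1 mat2) \<Rightarrow> lt list \<Rightarrow> 'a mat2" where
  "evalN L n = foldr (\<lambda>l M. mmul (L l) M) n mid"

definition evalW :: "(gen \<Rightarrow> 'a::comm_ring_1 mat2) \<Rightarrow> gen list \<Rightarrow> 'a mat2" where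
  "evalW G w = foldr (\<lambda>g M. mmul (G g) M) w mid"

lemma evalN_cons: "evalN L (l # r) = mmul (L l) (evalN L r)"
  by (simp add: evalN_def)

lemma evalW_cons: "evalW G (g # r) = mmul (G g) (evalW G r)"
  by (simp add: evalW_def)

lemma rel_pre: "mmul M N = msmult c P \<Longrightarrow> S c \<Longrightarrow> S 1 \<Longrightarrow> rel S (mmul M (mmul N X)) (mmul P X)"
proof -
  assume a: "mmul M N = msmult c P" "S c" "S 1"
  have "mmul M (mmul N X) = msmult c (mmul P X)"
    by (simp add: mmul_assoc[symmetric] a(1) mmul_smult_left)
  then show ?thesis using rel_smult[of S c "mmul P X"] a(2,3) by simp
qed

locale reprel =
  fixes S :: "'a::comm_ring_1 \<Rightarrow> bool" and L :: "lt \<Rightarrow> 'a mat2" and G :: "gen \<Rightarrow> 'a mat2"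
    and c1 c2 c3 c4 c5 d1 d2 d3 d4 :: 'a
  assumes cl: "\<And>a b. S a \<Longrightarrow> S b \<Longrightarrow> S (a*b)" and S1: "S 1"
    and Sc: "S c1" "S c2" "S c3" "S c4" "S c5" "S d1" "S d2" "S d3" "S d4"
    and sq: "mmul (L LA) (L LA) = msmult c1 mid" "mmul (L LB) (L LB) = msmult c2 (L LBi)"
      "mmul (L LBi) (L LBi) = msmult c3 (L LB)" "mmul (L LB) (L LBi) = msmult c4 mid"
      "mmul (L LBi) (L LB) = msmult c5 mid"
    and gg: "mmul (L LBi) (L LA) = msmult d1 (G S1)" "mmul (L LA) (L LB) = msmult d2 (G S1inv)"
      "mmul (L LA) (L LBi) = msmult d3 (G S2)" "mmul (L LB) (L LA) = msmult d4 (G S2inv)"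
begin

lemma tr: "rel S X Y \<Longrightarrow> rel S Y Z \<Longrightarrow> rel S X Z"
  using rel_trans[of S X Y Z] cl by blast

lemma f:
  "rel S X (mmul (L LA) (mmul (L LA) X))"
  "rel S (mmul (L LBi) X) (mmul (L LB) (mmul (L LB) X))"
  "rel S (mmul (L LB) X) (mmul (L LBi) (mmul (L LBi) X))"
  "rel S X (mmul (L LB) (mmul (L LBi) X))"
  "rel S X (mmul (L LBi) (mmul (L LB) X))"
  using rel_pre[OF sq(1) Sc(1) S1, of X] rel_pre[OF sq(2) Sc(2) S1, of X] rel_pre[OF sq(3) Sc(3) S1, of X]
   rel_pre[OF sq(4) Sc(4) S1, of X] rel_pre[OF sq(5) Sc(5) S1, of X]
  by (simp_all add: mmul_mid_left rel_sym)

lemma evalN_lmul: "rel S (evalN L (lmul x n)) (mmul (L x) (evalN L n))"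
  by (induction x n rule: lmul.induct) (simp_all add: evalN_cons f rel_refl S1)

lemma two: "rel S (evalN L (lmul x (lmul y n))) (mmul (mmul (L x) (L y)) (evalN L n))"
proof -
  have "rel S (evalN L (lmul x (lmul y n))) (mmul (L x) (evalN L (lmul y n)))" by (rule evalN_lmul)
  moreover have "rel S (mmul (L x) (evalN L (lmul y n))) (mmul (L x) (mmul (L y) (evalN L n)))"
    by (rule rel_mmul_left, rule evalN_lmul)
  ultimately show ?thesis using tr by (simp add: mmul_assoc)
qed

lemma gstep: "rel S (evalN L (gl g n)) (mmul (G g) (evalN L n))"
proof -
  have s: "rel S (mmul (msmult d M) X) (mmul M X)" if "S d" for d M X
    using rel_smult[OF that S1] by (simp add: mmul_smult_left)
  show ?thesis
  proof (cases g)
    case S1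
    have "rel S (evalN L (gl g n)) (mmul (msmult d1 (G S1)) (evalN L n))" using S1 two[of LBi LA n] by (simp add: gg)
    from tr[OF this s[OF Sc(6)]] show ?thesis using S1 by simp
  next
    case S1inv
    have "rel S (evalN L (gl g n)) (mmul (msmult d2 (G S1inv)) (evalN L n))" using S1inv two[of LA LB n] by (simp add: gg)
    from tr[OF this s[OF Sc(7)]] show ?thesis using S1inv by simp
  next
    case S2
    have "rel S (evalN L (gl g n)) (mmul (msmult d3 (G S2)) (evalN L n))" using S2 two[of LA LBi n] by (simp add: gg)
    from tr[OF this s[OF Sc(8)]] show ?thesis using S2 by simp
  next
    case S2inv
    have "rel S (evalN L (gl g n)) (mmul (msmult d4 (G S2inv)) (evalN L n))" using S2inv two[of LB LA n] by (simp add: gg)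
    from tr[OF this s[OF Sc(9)]] show ?thesis using S2inv by simp
  qed
qed

lemma main: "rel S (evalN L (nf w)) (evalW G w)"
proof (induction w)
  case Nil then show ?case by (simp add: nf_def evalN_def evalW_def rel_refl S1)
next
  case (Cons g w)
  have "nf (g # w) = gl g (nf w)" by (simp add: nf_def)
  moreover have "rel S (mmul (G g) (evalN L (nf w))) (mmul (G g) (evalW G w))"
    by (rule rel_mmul_left, rule Cons)
  ultimately show ?case using tr[OF gstep] by (simp add: evalW_cons)
qed

end

fun LZ :: "lt \<Rightarrow> int mat2" where
  "LZ LA = (0, -1, 1, 0)"
| "LZ LB = (0, -1, 1, 1)"
| "LZ LBi = (1, 1, -1, 0)"

lemma evalZ_eq: "evalZ = evalW gen_Z"
  by (rule ext) (simp add: evalZ_def evalW_def)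

interpretation Zrep: reprel "\<lambda>k::int. k = 1 \<or> k = -1" LZ gen_Z "-1" "-1" "-1" 1 1 1 "-1" 1 "-1"
  apply unfold_locales
  subgoal by (elim disjE) simp_all
  by (simp_all add: mid_def)



fun IL :: "lt \<Rightarrow> int mat2" where
  "IL LA = (2, 2, -3, -2)"
| "IL LB = (-4, -4, 3, 2)"
| "IL LBi = (2, 4, -3, -4)"

fun GI :: "gen \<Rightarrow> int mat2" where
  "GI S1 = (-4, -2, 3, 1)"
| "GI S1inv = (1, 2, -3, -4)"
| "GI S2 = (1, 0, 0, 2)"
| "GI S2inv = (2, 0, 0, 1)"

interpretation Irep: reprel "\<lambda>k::int. k \<noteq> 0" IL GI "-2" 2 2 4 4 2 "-2" "-2" 2
  apply unfold_locales
  subgoal by simp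
  by (simp_all add: mid_def)

fun cr :: "int \<times> int \<Rightarrow> int \<times> int \<Rightarrow> int" where
  "cr (a, b) (c, d) = a * d - b * c"

fun mv :: "int mat2 \<Rightarrow> int \<times> int \<Rightarrow> int \<times> int" where
  "mv (a, b, c, d) (x, y) = (a * x + b * y, c * x + d * y)"

fun det2 :: "int mat2 \<Rightarrow> int" where
  "det2 (a, b, c, d) = a * d - b * c"

lemma mv_mmul: "mv (mmul A B) v = mv A (mv B v)"
  by (cases A; cases B; cases v) (simp add: algebra_simps)

lemma mv_smult: "mv (msmult k A) v = (k * fst (mv A v), k * snd (mv A v))"
  by (cases A; cases v) (simp add: algebra_simps)

lemma cr_mv: "cr (mv M v) (mv M w) = det2 M * cr v w"
  by (cases M; cases v; cases w) (simp add: algebra_simps)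

lemma cr_scale: "cr (k * fst v, k * snd v) (l * fst w, l * snd w) = k * l * cr v w"
  by (cases v; cases w) (simp add: algebra_simps)

definition inreg :: "int \<times> int \<Rightarrow> int \<times> int \<Rightarrow> int \<times> int \<Rightarrow> bool" where
  "inreg e1 e2 v \<longleftrightarrow> (cr e1 v > 0 \<and> cr v e2 > 0) \<or> (cr e1 v < 0 \<and> cr v e2 < 0)"

lemma plucker: "cr e1 v * cr v' e2 - cr e1 v' * cr v e2 = - cr e1 e2 * cr v v'"
  by (cases e1; cases e2; cases v; cases v') (simp add: algebra_simps)

lemma zero_forms: assumes "cr e1 e2 \<noteq> 0" "cr e1 v = 0" "cr v e2 = 0" shows "v = (0, 0)"
proof -
  obtain a b c d x y where e: "e1 = (a, b)" "e2 = (c, d)" "v = (x, y)" by (cases e1; cases e2; cases v) auto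
  have D: "a * d - b * c \<noteq> 0" and 1: "a * y = b * x" and 2: "x * d = y * c" using assms e by auto
  have "x * (a * d - b * c) = 0"
  proof -
    have "x * (a * d - b * c) = a * (x * d) - c * (b * x)" by (simp add: algebra_simps)
    also have "\<dots> = a * (y * c) - c * (a * y)" using 1 2 by simp
    finally show ?thesis by simp
  qed
  moreover have "y * (a * d - b * c) = 0"
  proof -
    have "y * (a * d - b * c) = d * (a * y) - b * (y * c)" by (simp add: algebra_simps)
    also have "\<dots> = d * (b * x) - b * (x * d)" using 1 2 by simp
    finally show ?thesis by simp
  qed
  ultimately show ?thesis using D e by simp
qed

lemma inreg_par:
  assumes "cr e1 e2 \<noteq> 0" "v' \<noteq> (0, 0)" "cr v v' = 0" "inreg e1 e2 v"
  shows "inreg e1 e2 v'"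
proof -
  define F G F' G' where "F = cr e1 v" "G = cr v e2" "F' = cr e1 v'" "G' = cr v' e2"
  have id: "F * G' = F' * G" using plucker[of e1 v v' e2] assms(3) unfolding F_G_F'_G'_def by simp
  have nz: "\<not> (F' = 0 \<and> G' = 0)" using zero_forms[OF assms(1)] assms(2) unfolding F_G_F'_G'_def by blast
  have "(F > 0 \<and> G > 0) \<or> (F < 0 \<and> G < 0)" using assms(4) unfolding inreg_def F_G_F'_G'_def by simp
  then have "(F'>0 \<and> G'>0) \<or> (F'<0 \<and> G'<0)"
  proof
    assume "F > 0 \<and> G > 0" then show ?thesis using id nz
      by (metis mult_less_0_iff not_less_iff_gr_or_eq zero_less_mult_iff)
  next
    assume "F < 0 \<and> G < 0" then show ?thesis using id nz
      by (metis mult_less_0_iff not_less_iff_gr_or_eq zero_less_mult_iff)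
  qed
  then show ?thesis unfolding inreg_def F_G_F'_G'_def by simp
qed

fun Reg :: "lt \<Rightarrow> int \<times> int \<Rightarrow> bool" where
  "Reg LA v = inreg (3, 4) (-5, 6) v"
| "Reg LBi v = inreg (-5, 6) (-11, 7) v"
| "Reg LB v = inreg (-11, 7) (-6, -5) v"

lemma Reg_par: "v' \<noteq> (0, 0) \<Longrightarrow> cr v v' = 0 \<Longrightarrow> Reg l v \<Longrightarrow> Reg l v'"
  by (cases l) (auto intro: inreg_par)

lemma Reg_nz: "Reg l v \<Longrightarrow> v \<noteq> (0, 0)"
  by (cases l) (auto simp: inreg_def)

lemma Reg_disj: "Reg l v \<Longrightarrow> Reg l' v \<Longrightarrow> l = l'"
  by (cases v; cases l; cases l') (auto simp: inreg_def)

lemma x0_notin: "\<not> Reg l (1, 1)"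
  by (cases l) (auto simp: inreg_def)

lemma mapA: "Reg LB v \<or> Reg LBi v \<Longrightarrow> Reg LA (mv (IL LA) v)"
  by (cases v) (auto simp: inreg_def)

lemma mapB: "Reg LA v \<Longrightarrow> Reg LB (mv (IL LB) v)"
  by (cases v) (auto simp: inreg_def)

lemma mapBi: "Reg LA v \<Longrightarrow> Reg LBi (mv (IL LBi) v)"
  by (cases v) (auto simp: inreg_def)

lemma map0: "Reg l (mv (IL l) (1, 1))"
  by (cases l) (auto simp: inreg_def)

definition vec :: "lt list \<Rightarrow> int \<times> int" where
  "vec n = mv (evalN IL n) (1, 1)"

lemma vec_nil: "vec [] = (1, 1)" by (simp add: vec_def evalN_def mid_def)

lemma vec_cons: "vec (l # r) = mv (IL l) (vec r)"
  by (simp add: vec_def evalN_cons mv_mmul)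

lemma det_IL: "det2 (IL l) \<noteq> 0" by (cases l) auto

lemma cr_sym0: "cr v w = 0 \<Longrightarrow> cr w v = 0"
  by (cases v; cases w) (simp add: algebra_simps)

lemma reg_vec: "okn n \<Longrightarrow> n \<noteq> [] \<Longrightarrow> Reg (hd n) (vec n)"
proof (induction n rule: okn.induct)
  case 1 then show ?case by simp
next
  case (2 x) then show ?case by (simp add: vec_cons vec_nil map0)
next
  case (3 x y r)
  then have c: "compat x y" and IH: "Reg y (vec (y # r))" by auto
  have e: "vec (x # y # r) = mv (IL x) (vec (y # r))" by (rule vec_cons)
  show ?case
    unfolding e using c IH mapA mapB mapBi unfolding compat_def
    by (cases x; cases y) simp_all
qed

lemma vec_nz: "okn n \<Longrightarrow> vec n \<noteq> (0, 0)"
  by (cases n) (auto simp: vec_nil dest: reg_vec Reg_nz)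

lemma vec_inj: "okn n1 \<Longrightarrow> okn n2 \<Longrightarrow> cr (vec n1) (vec n2) = 0 \<Longrightarrow> n1 = n2"
proof (induction n1 arbitrary: n2)
  case Nil
  show ?case
  proof (cases n2)
    case (Cons l r)
    have "Reg l (vec n2)" using reg_vec[OF Nil(2)] Cons by simp
    then have "Reg l (vec [])" using Reg_par[OF vec_nz[OF Nil(1)] cr_sym0[OF Nil(3)]] by blast
    then show ?thesis using x0_notin vec_nil by simp
  qed simp
next
  case (Cons l1 r1)
  show ?case
  proof (cases n2)
    case Nil
    have "Reg l1 (vec (l1 # r1))" using reg_vec[OF Cons(2)] by simp
    then have "Reg l1 (vec [])" using Reg_par[OF vec_nz[of "[]"] Cons(4)[unfolded Nil]] by simp
    then show ?thesis using x0_notin vec_nil by simp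
  next
    case (Cons l2 r2)
    note C = Cons.prems
    have R1: "Reg l1 (vec (l1 # r1))" using reg_vec[OF C(1)] by simp
    have R2: "Reg l2 (vec n2)" using reg_vec[OF C(2)] Cons by simp
    have "Reg l1 (vec n2)" using Reg_par[OF vec_nz[OF C(2)] C(3) R1] .
    then have l: "l1 = l2" using Reg_disj R2 by blast
    have "det2 (IL l1) * cr (vec r1) (vec r2) = 0"
      using C(3) Cons l by (simp add: vec_cons cr_mv)
    then have "cr (vec r1) (vec r2) = 0" using det_IL by simp
    moreover have "okn r1" "okn r2" using C(1,2) Cons okn_tl by blast+
    ultimately have "r1 = r2" using Cons.IH by blast
    then show ?thesis using l Cons by simp
  qed
qed



definition emb :: "int poly \<Rightarrow> rf" where "emb p = Fract p 1"

lemma emb_add: "emb (p + q) = emb p + emb q" by (simp add: emb_def)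
lemma emb_mult: "emb (p * q) = emb p * emb q" by (simp add: emb_def)
lemma emb_minus: "emb (- p) = - emb p" by (simp add: emb_def)
lemma emb_diff: "emb (p - q) = emb p - emb q" by (simp add: emb_def)
lemma emb_one: "emb 1 = 1" by (simp add: emb_def One_fract_def)
lemma emb_zero: "emb 0 = 0" by (simp add: emb_def Zero_fract_def)
lemma emb_power: "emb (p ^ n) = emb p ^ n"
  by (induction n) (simp_all add: emb_one emb_mult)
lemma emb_inj: "emb p = 0 \<Longrightarrow> p = 0"
  by (simp add: emb_def Zero_fract_def eq_fract)

definition XP :: "int poly" where "XP = [:0, 1:]"
lemma emb_XP: "emb XP = tt" by (simp add: emb_def XP_def tt_def)

lemma tt_nz: "tt \<noteq> 0"
  by (simp add: tt_def Zero_fract_def eq_fract)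

lemma tt1_nz: "1 + tt \<noteq> 0"
proof -
  have "1 + tt = Fract [:1, 1:] 1" by (simp add: tt_def One_fract_def one_pCons)
  then show ?thesis by (simp add: Zero_fract_def eq_fract)
qed

fun embM :: "int poly mat2 \<Rightarrow> rf mat2" where
  "embM (a, b, c, d) = (emb a, emb b, emb c, emb d)"

lemma embM_mmul: "embM (mmul A B) = mmul (embM A) (embM B)"
  by (cases A; cases B) (simp add: emb_add emb_mult)

lemma embM_mid: "embM mid = mid"
  by (simp add: mid_def emb_one emb_zero)

fun evM :: "int poly mat2 \<Rightarrow> int mat2" where
  "evM (a, b, c, d) = (poly a (-2), poly b (-2), poly c (-2), poly d (-2))"

lemma evM_mmul: "evM (mmul A B) = mmul (evM A) (evM B)"
  by (cases A; cases B) simp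

lemma evM_mid: "evM mid = mid"
  by (simp add: mid_def)

fun GP :: "gen \<Rightarrow> int poly mat2" where
  "GP S1 = (-(XP^2), XP, 1 + XP + XP^2, 1)"
| "GP S1inv = (1, -XP, -(1 + XP + XP^2), -(XP^2))"
| "GP S2 = (1, 0, 0, -XP)"
| "GP S2inv = (-XP, 0, 0, 1)"

lemma evM_GP: "evM (GP g) = GI g"
  by (cases g) (simp_all add: XP_def)

lemma evM_evalW: "evM (evalW GP w) = evalW GI w"
  by (induction w) (simp_all add: evalW_def evM_mmul evM_mid evM_GP)

fun cg :: "gen \<Rightarrow> rf" where
  "cg S1 = 1 / (1 + tt)"
| "cg S1inv = - 1 / (tt * (1 + tt))"
| "cg S2 = 1"
| "cg S2inv = - 1 / tt"

lemma cg_nz: "cg g \<noteq> 0"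
  using tt_nz tt1_nz by (cases g) auto

lemma field1: fixes x :: "'a::field" assumes "x \<noteq> 0" "1 + x \<noteq> 0"
  shows "(- (x ^ 2) / (1 + x), x / (1 + x), (1 + x + x ^ 2) / (1 + x), 1 / (1 + x))
     = msmult (1 / (1 + x)) (-(x^2), x, 1 + x + x^2, 1)"
  using assms by (simp add: field_simps)

lemma field2: fixes x :: "'a::field" assumes "x \<noteq> 0" "1 + x \<noteq> 0"
  shows "minv (- (x ^ 2) / (1 + x), x / (1 + x), (1 + x + x ^ 2) / (1 + x), 1 / (1 + x))
     = msmult (- 1 / (x * (1 + x))) (1, -x, -(1 + x + x^2), -(x^2))"
proof -
  have D: "- (x ^ 2) / (1 + x) * (1 / (1 + x)) - x / (1 + x) * ((1 + x + x ^ 2) / (1 + x)) = - x"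
  proof -
    have "- (x ^ 2) / (1 + x) * (1 / (1 + x)) - x / (1 + x) * ((1 + x + x ^ 2) / (1 + x))
        = (-(x^2) - x*(1+x+x^2)) / ((1+x)*(1+x))"
      by (simp only: times_divide_times_eq mult_1_right diff_divide_distrib)
    also have "-(x^2) - x*(1+x+x^2) = -x * ((1+x)*(1+x))" by (simp add: algebra_simps power2_eq_square)
    finally show ?thesis using assms by simp
  qed
  show ?thesis using assms unfolding minv.simps Let_def D by (simp add: field_simps) (simp add: minus_divide_left algebra_simps)
qed

lemma field3: fixes x :: "'a::field" assumes "x \<noteq> 0"
  shows "minv (1, 0, 0, - x) = msmult (- 1 / x) (-x, 0, 0, 1)"
  using assms by (simp add: field_simps)

lemma gen_mu_eq: "gen_mu g = msmult (cg g) (embM (GP g))"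
proof (cases g)
  case S1 then show ?thesis
    using field1[OF tt_nz tt1_nz] by (simp add: mu_s1_def emb_add emb_minus emb_power emb_XP emb_one)
next
  case S1inv then show ?thesis
    using field2[OF tt_nz tt1_nz] by (simp add: mu_s1_def emb_diff emb_add emb_minus emb_power emb_XP emb_one)
next
  case S2 then show ?thesis
    by (simp add: mu_s2_def emb_minus emb_XP emb_one emb_zero)
next
  case S2inv then show ?thesis
    using field3[OF tt_nz] by (simp add: mu_s2_def emb_minus emb_XP emb_one emb_zero)
qed

lemma evalMu_eq: "\<exists>c. c \<noteq> 0 \<and> evalMu w = msmult c (embM (evalW GP w))"
proof (induction w)
  case Nil then show ?case
    by (rule exI[of _ 1]) (simp add: evalMu_def evalW_def embM_mid msmult_one)
next
  case (Cons g w)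
  then obtain c where c: "c \<noteq> 0" "evalMu w = msmult c (embM (evalW GP w))" by blast
  have "evalMu (g # w) = mmul (gen_mu g) (evalMu w)" by (simp add: evalMu_def)
  also have "\<dots> = msmult (cg g * c) (embM (evalW GP (g # w)))"
    by (simp add: gen_mu_eq c(2) mmul_smult_left mmul_smult_right msmult_msmult evalW_cons embM_mmul mult.commute)
  finally show ?case using c(1) cg_nz[of g] by (intro exI[of _ "cg g * c"]) simp
qed



fun crP :: "'a::comm_ring_1 mat2 \<Rightarrow> 'a mat2 \<Rightarrow> 'a" where
  "crP (a, b, c, d) (e, f, g, h) = (a + b) * (g + h) - (c + d) * (e + f)"

lemma cr_crP: "cr (mv M (1, 1)) (mv N (1, 1)) = crP M N"
  by (cases M; cases N) (simp add: algebra_simps)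

lemma evM_crP: "crP (evM A) (evM B) = poly (crP A B) (-2)"
  by (cases A; cases B) simp

lemma emb_crP: "emb (crP A B) = crP (embM A) (embM B)"
  by (cases A; cases B) (simp add: emb_add emb_mult emb_diff)

lemma crP_smult: "crP (msmult k B) B = 0"
  by (cases B) (simp add: algebra_simps)

lemma msmult_cancel: "(c::'a::field) \<noteq> 0 \<Longrightarrow> msmult c A = B \<Longrightarrow> A = msmult (1/c) B"
  by (cases A; cases B) (auto simp: field_simps)

lemma rel_vec:
  assumes "rel (\<lambda>k::int. k \<noteq> 0) N W"
  shows "\<exists>k1 k2. k1 \<noteq> 0 \<and> k2 \<noteq> 0 \<and> (k1 * fst (mv N (1,1)), k1 * snd (mv N (1,1)))
     = (k2 * fst (mv W (1,1)), k2 * snd (mv W (1,1)))"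
proof -
  obtain k1 k2 where "k1 \<noteq> 0" "k2 \<noteq> 0" "msmult k1 N = msmult k2 W" using assms unfolding rel_def by blast
  then show ?thesis by (metis mv_smult)
qed

theorem lemma3p14:
  fixes w v :: "gen list"
  assumes "pgl_eq (evalMu w) (evalMu v)"
  shows "psl_eq (evalZ w) (evalZ v)"
proof -
  obtain u where u: "u \<noteq> 0" "evalMu w = msmult u (evalMu v)"
    using assms unfolding pgl_eq_def R_unit_def by blast
  obtain cw where cw: "cw \<noteq> 0" "evalMu w = msmult cw (embM (evalW GP w))" using evalMu_eq by blast
  obtain cv where cv: "cv \<noteq> 0" "evalMu v = msmult cv (embM (evalW GP v))" using evalMu_eq by blast
  have "msmult cw (embM (evalW GP w)) = msmult (u * cv) (embM (evalW GP v))"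
    using u cw cv by (simp add: msmult_msmult)
  then have E: "embM (evalW GP w) = msmult (1/cw) (msmult (u * cv) (embM (evalW GP v)))"
    using msmult_cancel[OF cw(1)] by blast
  have "emb (crP (evalW GP w) (evalW GP v)) = 0"
    unfolding emb_crP E msmult_msmult crP_smult ..
  then have "crP (evalW GP w) (evalW GP v) = 0" by (rule emb_inj)
  then have "crP (evalW GI w) (evalW GI v) = 0"
    using evM_crP[of "evalW GP w" "evalW GP v"] by (simp add: evM_evalW)
  then have C: "cr (mv (evalW GI w) (1, 1)) (mv (evalW GI v) (1, 1)) = 0" by (simp add: cr_crP)
  obtain k1 k2 where k: "k1 \<noteq> 0" "k2 \<noteq> 0"
     "(k1 * fst (vec (nf w)), k1 * snd (vec (nf w))) = (k2 * fst (mv (evalW GI w) (1,1)), k2 * snd (mv (evalW GI w) (1,1)))"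
    using rel_vec[OF Irep.main[of w]] unfolding vec_def by blast
  obtain l1 l2 where l: "l1 \<noteq> 0" "l2 \<noteq> 0"
     "(l1 * fst (vec (nf v)), l1 * snd (vec (nf v))) = (l2 * fst (mv (evalW GI v) (1,1)), l2 * snd (mv (evalW GI v) (1,1)))"
    using rel_vec[OF Irep.main[of v]] unfolding vec_def by blast
  have "k1 * l1 * cr (vec (nf w)) (vec (nf v)) = k2 * l2 * cr (mv (evalW GI w) (1, 1)) (mv (evalW GI v) (1, 1))"
    using cr_scale[of k1 "vec (nf w)" l1 "vec (nf v)"] cr_scale[of k2 "mv (evalW GI w) (1, 1)" l2 "mv (evalW GI v) (1, 1)"]
      k(3) l(3) by simp
  then have "cr (vec (nf w)) (vec (nf v)) = 0" using C k l by simp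
  then have nfe: "nf w = nf v" using vec_inj okn_nf by blast
  have "rel (\<lambda>k::int. k = 1 \<or> k = -1) (evalW gen_Z w) (evalW gen_Z v)"
    using Zrep.tr[OF rel_sym[OF Zrep.main[of w]], of "evalW gen_Z v"] Zrep.main[of v] nfe by simp
  then obtain a b :: int where ab: "a = 1 \<or> a = -1" "b = 1 \<or> b = -1" "msmult a (evalZ w) = msmult b (evalZ v)"
    unfolding rel_def evalZ_eq by blast
  have "evalZ w = msmult (a * b) (evalZ v)"
  proof -
    have "evalZ w = msmult (a * a) (evalZ w)" using ab(1) by (auto simp: msmult_one)
    also have "\<dots> = msmult a (msmult b (evalZ v))" using ab(3) by (simp add: msmult_msmult[symmetric])
    finally show ?thesis by (simp add: msmult_msmult)
  qed
  then show ?thesis unfolding psl_eq_def using ab(1,2) by (auto simp: msmult_one)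
qed

end
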